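(* Let $F=(X,Y,Z)\colon\mathbb{D}_1\to\mathbb{C}^3$ be a bounded null holomorphic immersion with complete induced metric such that $1<|X|<2$ and $|Y|<1/3$ on $\mathbb{D}_1$. Let $W(z):=-\int_0^z Y\,dX$ and $$\mathcal{L}:=\begin{pmatrix}e^{-W}&Ye^{W}\\ Xe^{-W}&(1+XY)e^{W}\end{pmatrix},$$ so that $\mathcal{L}^{-1}d\mathcal{L}=\begin{pmatrix}0&\theta\\ \omega&0\end{pmatrix}$ with $\omega=e^{-2W}dX$, $\theta=e^{2W}(dY-Y^2dX)$. Then the metric $ds^2_{\mathcal L}=|\omega|^2+|\theta|^2$ is complete on $\mathbb{D}_1$; i.e., the flat front $f=\mathcal{L}\mathcal{L}^*\colon\mathbb{D}_1\to H^3$ is weakly complete.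
   Context: $\mathbb{D}_1$ is the open unit disk; null means $F_z\cdot F_z\equiv 0$ for the complex bilinear dot product on $\mathbb{C}^3$. $H^3=\{aa^*: a\in\mathrm{SL}(2,\mathbb{C})\}$. A flat front $f=\mathcal{L}\mathcal{L}^*$ with holomorphic Legendrian lift $\mathcal{L}$ is weakly complete if $|\omega|^2+|\theta|^2$ is a complete Riemannian metric on $\mathbb{D}_1$. *)

theory Defs
  imports "HOL-Analysis.Analysis"
begin

text \<open>A conformal metric rho(z)|dz| on the open unit disk is complete iff every
  divergent C^1 path gamma : [0,1) -> D_1 (i.e. |gamma(t)| -> 1 as t -> 1, equivalently
  gamma leaves every compact subset of D_1) has infinite length.\<close>
definition complete_disk_metric :: "(complex \<Rightarrow> real) \<Rightarrow> bool" where
  "complete_disk_metric \<rho> \<longleftrightarrow>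
     (\<forall>\<gamma> \<gamma>'.
        (\<forall>t\<in>{0..<1}. (\<gamma> has_vector_derivative \<gamma>' t) (at t within {0..<1::real})) \<and>
        continuous_on {0..<1} \<gamma>' \<and>
        \<gamma> ` {0..<1} \<subseteq> ball 0 1 \<and>
        ((\<lambda>t. norm (\<gamma> t)) \<longlongrightarrow> 1) (at_left 1)
        \<longrightarrow> (\<integral>\<^sup>+ t. ennreal (\<rho> (\<gamma> t) * norm (\<gamma>' t)) * indicator {0..<1} t \<partial>lborel) = \<infinity>)"

definition holo_map3 :: "(complex \<Rightarrow> complex) \<Rightarrow> (complex \<Rightarrow> complex) \<Rightarrow> (complex \<Rightarrow> complex) \<Rightarrow> bool" where
  "holo_map3 X Y Z \<longleftrightarrow> X holomorphic_on ball 0 1 \<and> Y holomorphic_on ball 0 1 \<and> Z holomorphic_on ball 0 1"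

definition null_map3 where
  "null_map3 X Y Z \<longleftrightarrow> (\<forall>z\<in>ball 0 1. (deriv X z)\<^sup>2 + (deriv Y z)\<^sup>2 + (deriv Z z)\<^sup>2 = 0)"

definition immersion_map3 where
  "immersion_map3 X Y Z \<longleftrightarrow> (\<forall>z\<in>ball 0 1. (deriv X z, deriv Y z, deriv Z z) \<noteq> (0,0,0))"

definition induced_density3 where
  "induced_density3 X Y Z z = sqrt ((cmod (deriv X z))\<^sup>2 + (cmod (deriv Y z))\<^sup>2 + (cmod (deriv Z z))\<^sup>2)"

text \<open>Flat front f = L L^* with holomorphic Legendrian lift L = ((a,b),(c,d)):
  L^{-1} dL = ((0,theta),(omega,0)); omega is the (2,1) entry, theta the (1,2) entry of
  L^{-1} L' dz, where L^{-1} = (1/det L) ((d,-b),(-c,a)).\<close>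
definition lift_omega :: "(complex \<Rightarrow> complex) \<Rightarrow> (complex \<Rightarrow> complex) \<Rightarrow> (complex \<Rightarrow> complex) \<Rightarrow> (complex \<Rightarrow> complex) \<Rightarrow> complex \<Rightarrow> complex" where
  "lift_omega a b c d z = (a z * deriv c z - c z * deriv a z) / (a z * d z - b z * c z)"

definition lift_theta :: "(complex \<Rightarrow> complex) \<Rightarrow> (complex \<Rightarrow> complex) \<Rightarrow> (complex \<Rightarrow> complex) \<Rightarrow> (complex \<Rightarrow> complex) \<Rightarrow> complex \<Rightarrow> complex" where
  "lift_theta a b c d z = (d z * deriv b z - b z * deriv d z) / (a z * d z - b z * c z)"

definition weakly_complete_front where
  "weakly_complete_front a b c d \<longleftrightarrow>
     complete_disk_metric (\<lambda>z. sqrt ((cmod (lift_omega a b c d z))\<^sup>2 + (cmod (lift_theta a b c d z))\<^sup>2))"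

end

theory Submission
  imports Defs "HOL-Complex_Analysis.Complex_Analysis"
begin


lemma gronwall_path:
  fixes \<gamma> \<gamma>' :: "real \<Rightarrow> complex" and c d om th :: "complex \<Rightarrow> complex" and \<rho> :: "complex \<Rightarrow> real"
  assumes dg: "\<forall>t\<in>{0..<1}. (\<gamma> has_vector_derivative \<gamma>' t) (at t within {0..<1::real})"
  and cg': "continuous_on {0..<1} \<gamma>'"
  and img: "\<gamma> ` {0..<1} \<subseteq> ball 0 1"
  and dc: "\<And>z. z \<in> ball 0 1 \<Longrightarrow> (c has_field_derivative d z * om z) (at z)"
  and dd: "\<And>z. z \<in> ball 0 1 \<Longrightarrow> (d has_field_derivative c z * th z) (at z)"
  and cr: "continuous_on (ball 0 1) \<rho>"
  and bo: "\<And>z. z \<in> ball 0 1 \<Longrightarrow> cmod (om z) \<le> \<rho> z"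
  and bt: "\<And>z. z \<in> ball 0 1 \<Longrightarrow> cmod (th z) \<le> \<rho> z"
  and fin: "(\<integral>\<^sup>+ t. ennreal (\<rho> (\<gamma> t) * norm (\<gamma>' t)) * indicator {0..<1} t \<partial>lborel) \<noteq> \<infinity>"
  shows "\<exists>M. \<forall>t\<in>{0..<1}. (cmod (c (\<gamma> t)))\<^sup>2 + (cmod (d (\<gamma> t)))\<^sup>2 \<le> M"
proof -
  define g where "g t = \<rho> (\<gamma> t) * norm (\<gamma>' t)" for t
  have c\<gamma>: "continuous_on {0..<1} \<gamma>"
    using dg by (intro continuous_on_vector_derivative) auto
  have cg: "continuous_on {0..<1} g"
    unfolding g_def
    by (intro continuous_on_mult continuous_on_norm cg' continuous_on_compose2[OF cr c\<gamma> img])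
  have g0: "0 \<le> g t" if "t \<in> {0..<1}" for t
  proof -
    have "\<gamma> t \<in> ball 0 1" using img that by (auto simp del: mem_ball simp: image_subset_iff)
    then have "0 \<le> \<rho> (\<gamma> t)" using bo[of "\<gamma> t"] norm_ge_zero order_trans by blast
    then show ?thesis unfolding g_def by simp
  qed
  define L where "L = (\<integral>\<^sup>+ t. ennreal (g t) * indicator {0..<1} t \<partial>lborel)"
  have Lfin: "L < top" using fin unfolding L_def g_def by (simp add: less_top[symmetric])
  define l where "l = enn2real L"
  have Gle: "integral {0..t} g \<le> l" if t: "t \<in> {0..<1}" for t
  proof -
    have sub: "{0..t} \<subseteq> {0..<1}" using t by auto
    have cgt: "continuous_on {0..t} g" using cg sub continuous_on_subset by blast
    have hi: "(g has_integral integral {0..t} g) {0..t}"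
      using integrable_continuous_interval[OF cgt] by (simp add: integrable_integral)
    have "(\<integral>\<^sup>+ x. ennreal (g x) * indicator {0..t} x \<partial>lborel) = ennreal (integral {0..t} g)"
      by (rule nn_integral_has_integral_lebesgue'[OF _ hi]) (use g0 sub in auto)
    moreover have "(\<integral>\<^sup>+ x. ennreal (g x) * indicator {0..t} x \<partial>lborel) \<le> L"
      unfolding L_def
      by (intro nn_integral_mono) (use sub t in \<open>auto split: split_indicator\<close>)
    ultimately have "ennreal (integral {0..t} g) \<le> L" by simp
    then have "enn2real (ennreal (integral {0..t} g)) \<le> l"
      unfolding l_def by (rule enn2real_mono[OF _ Lfin])
    moreover have "0 \<le> integral {0..t} g"
      by (rule integral_nonneg[OF integrable_continuous_interval[OF cgt]]) (use g0 sub in auto)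
    ultimately show ?thesis by simp
  qed
  define N where "N s = (cmod (c (\<gamma> s)))\<^sup>2 + (cmod (d (\<gamma> s)))\<^sup>2" for s
  have ccont: "continuous_on (ball 0 1) c"
    by (rule continuous_at_imp_continuous_on) (use dc DERIV_continuous in blast)
  have dcont: "continuous_on (ball 0 1) d"
    by (rule continuous_at_imp_continuous_on) (use dd DERIV_continuous in blast)
  have Ncont: "continuous_on {0..<1} N"
    unfolding N_def
    by (intro continuous_intros continuous_on_compose2[OF ccont c\<gamma> img] continuous_on_compose2[OF dcont c\<gamma> img])
  have main: "N t \<le> N 0 * exp (2 * l)" if t: "t \<in> {0..<1}" for t
  proof -
    have sub: "{0..t} \<subseteq> {0..<1}" using t by auto
    have cgt: "continuous_on {0..t} g" using cg sub continuous_on_subset by blast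
    define G where "G s = integral {0..s} g" for s
    define h where "h s = N s * exp (- 2 * G s)" for s
    have Gc: "continuous_on {0..t} G"
      unfolding G_def by (rule indefinite_integral_continuous_1[OF integrable_continuous_interval[OF cgt]])
    have hc: "continuous_on {0..t} h"
      unfolding h_def
      by (intro continuous_intros Gc continuous_on_subset[OF Ncont sub])
    have "h t \<le> h 0"
    proof (rule DERIV_nonpos_imp_decreasing_open[of 0 t h])
      show "0 \<le> t" using t by simp
      show "continuous_on {0..t} h" by (rule hc)
      fix x assume x: "0 < x" "x < t"
      have x1: "x \<in> {0<..<1}" using x t by auto
      have ob: "open {0<..<(1::real)}" by simp
      have dgx: "(\<gamma> has_vector_derivative \<gamma>' x) (at x)"
      proof -
        have a: "(\<gamma> has_vector_derivative \<gamma>' x) (at x within {0..<1})" using dg x1 by auto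
        have s01: "{0<..<1} \<subseteq> {0..<(1::real)}" by auto
        show ?thesis using has_vector_derivative_within_subset[OF a s01] at_within_open[OF x1 ob] by simp
      qed
      have gx: "\<gamma> x \<in> ball 0 1" using img x1 by (auto simp del: mem_ball simp: image_subset_iff)
      define C where "C = c (\<gamma> x)"
      define D where "D = d (\<gamma> x)"
      define C' where "C' = \<gamma>' x * (d (\<gamma> x) * om (\<gamma> x))"
      define D' where "D' = \<gamma>' x * (c (\<gamma> x) * th (\<gamma> x))"
      have dC: "((\<lambda>s. c (\<gamma> s)) has_vector_derivative C') (at x)"
        using field_vector_diff_chain_at[OF dgx dc[OF gx]] unfolding C'_def o_def .
      have dD: "((\<lambda>s. d (\<gamma> s)) has_vector_derivative D') (at x)"
        using field_vector_diff_chain_at[OF dgx dd[OF gx]] unfolding D'_def o_def .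
      define Q' where "Q' = C' * cnj C + C * cnj C' + (D' * cnj D + D * cnj D')"
      have dQ: "((\<lambda>s. c (\<gamma> s) * cnj (c (\<gamma> s)) + d (\<gamma> s) * cnj (d (\<gamma> s))) has_vector_derivative Q') (at x)"
      proof -
        have 1: "((\<lambda>s. c (\<gamma> s) * cnj (c (\<gamma> s))) has_vector_derivative (C * cnj C' + C' * cnj C)) (at x)"
          unfolding C_def by (rule has_vector_derivative_mult[OF dC has_vector_derivative_cnj[OF dC]])
        have 2: "((\<lambda>s. d (\<gamma> s) * cnj (d (\<gamma> s))) has_vector_derivative (D * cnj D' + D' * cnj D)) (at x)"
          unfolding D_def by (rule has_vector_derivative_mult[OF dD has_vector_derivative_cnj[OF dD]])
        have "Q' = (C * cnj C' + C' * cnj C) + (D * cnj D' + D' * cnj D)" unfolding Q'_def by simp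
        then show ?thesis using has_vector_derivative_add[OF 1 2] by simp
      qed
      have Neq: "N = (\<lambda>s. Re (c (\<gamma> s) * cnj (c (\<gamma> s)) + d (\<gamma> s) * cnj (d (\<gamma> s))))"
        unfolding N_def by (auto simp: fun_eq_iff complex_norm_square[symmetric])
      have dN: "(N has_real_derivative Re Q') (at x)"
        using dQ unfolding Neq has_vector_derivative_complex_iff by blast
      have dG: "(G has_real_derivative g x) (at x)"
      proof -
        have "(G has_vector_derivative g x) (at x within {0..t})"
          unfolding G_def by (rule integral_has_vector_derivative[OF cgt]) (use x in auto)
        moreover have "at x within {0..t} = at x"
          by (rule at_within_interior) (use x in auto)
        ultimately show ?thesis by (simp add: has_real_derivative_iff_has_vector_derivative)
      qed
      have e: "((\<lambda>s. exp (- 2 * G s)) has_real_derivative exp (- 2 * G x) * (- 2 * g x)) (at x)"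
        using DERIV_chain2[OF DERIV_exp DERIV_cmult[OF dG, of "- 2"]] by simp
      have dh: "(h has_real_derivative (Re Q' * exp (- 2 * G x) + N x * (exp (- 2 * G x) * (- 2 * g x)))) (at x)"
        unfolding h_def using DERIV_mult'[OF dN e] by (simp add: algebra_simps)
      have ro: "cmod (om (\<gamma> x)) \<le> \<rho> (\<gamma> x)" using bo[OF gx] .
      have rt: "cmod (th (\<gamma> x)) \<le> \<rho> (\<gamma> x)" using bt[OF gx] .
      have nC': "cmod C' \<le> cmod D * g x"
      proof -
        have "cmod C' = norm (\<gamma>' x) * cmod D * cmod (om (\<gamma> x))"
          unfolding C'_def D_def by (simp add: norm_mult)
        also have "\<dots> \<le> norm (\<gamma>' x) * cmod D * \<rho> (\<gamma> x)"
          by (intro mult_left_mono ro) auto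
        finally show ?thesis unfolding g_def by (simp add: algebra_simps)
      qed
      have nD': "cmod D' \<le> cmod C * g x"
      proof -
        have "cmod D' = norm (\<gamma>' x) * cmod C * cmod (th (\<gamma> x))"
          unfolding D'_def C_def by (simp add: norm_mult)
        also have "\<dots> \<le> norm (\<gamma>' x) * cmod C * \<rho> (\<gamma> x)"
          by (intro mult_left_mono rt) auto
        finally show ?thesis unfolding g_def by (simp add: algebra_simps)
      qed
      have ReQ: "Re Q' \<le> 2 * (cmod C * cmod C') + 2 * (cmod D * cmod D')"
      proof -
        have a: "Re (C' * cnj C) \<le> cmod C * cmod C'"
          using complex_Re_le_cmod[of "C' * cnj C"] by (simp add: norm_mult mult.commute)
        have b: "Re (C * cnj C') \<le> cmod C * cmod C'"
          using complex_Re_le_cmod[of "C * cnj C'"] by (simp add: norm_mult mult.commute)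
        have a2: "Re (D' * cnj D) \<le> cmod D * cmod D'"
          using complex_Re_le_cmod[of "D' * cnj D"] by (simp add: norm_mult mult.commute)
        have b2: "Re (D * cnj D') \<le> cmod D * cmod D'"
          using complex_Re_le_cmod[of "D * cnj D'"] by (simp add: norm_mult mult.commute)
        show ?thesis unfolding Q'_def using a b a2 b2 by simp
      qed
      have gx0: "0 \<le> g x" using g0 x1 by auto
      have "2 * (cmod C * cmod C') + 2 * (cmod D * cmod D') \<le> 2 * (cmod C * (cmod D * g x)) + 2 * (cmod D * (cmod C * g x))"
        by (intro add_mono mult_left_mono nC' nD') auto
      also have "\<dots> = (2 * (2 * cmod C * cmod D)) * g x" by (simp add: algebra_simps)
      also have "\<dots> \<le> (2 * N x) * g x"
      proof (intro mult_right_mono gx0)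
        have "2 * cmod C * cmod D \<le> (cmod C)\<^sup>2 + (cmod D)\<^sup>2"
          using sum_squares_ge_zero[of "cmod C" "cmod D"]
          using zero_le_power2[of "cmod C - cmod D"] unfolding power2_diff by linarith
        then show "2 * (2 * cmod C * cmod D) \<le> 2 * N x"
          unfolding N_def C_def D_def by simp
      qed
      finally have RQ: "Re Q' \<le> 2 * N x * g x" using ReQ by linarith
      have "Re Q' * exp (- 2 * G x) + N x * (exp (- 2 * G x) * (- 2 * g x))
            = exp (- 2 * G x) * (Re Q' - 2 * N x * g x)" by (simp add: algebra_simps)
      also have "\<dots> \<le> 0"
        using RQ by (intro mult_nonneg_nonpos) auto
      finally show "\<exists>y. (h has_real_derivative y) (at x) \<and> y \<le> 0" using dh by blast
    qed
    then have "N t * exp (- 2 * G t) \<le> N 0" unfolding h_def G_def by simp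
    then have "N t \<le> N 0 * exp (2 * G t)"
      by (simp add: exp_minus field_simps)
    also have "\<dots> \<le> N 0 * exp (2 * l)"
    proof (intro mult_left_mono)
      show "exp (2 * G t) \<le> exp (2 * l)" using Gle[OF t] unfolding G_def by simp
      show "0 \<le> N 0" unfolding N_def by simp
    qed
    finally show ?thesis .
  qed
  then show ?thesis unfolding N_def by blast
qed


lemma cdm_cong:
  assumes eq: "\<And>z. z \<in> ball 0 1 \<Longrightarrow> f z = g z" and c: "complete_disk_metric f"
  shows "complete_disk_metric g"
  unfolding complete_disk_metric_def
proof (intro allI impI)
  fix \<gamma> :: "real \<Rightarrow> complex" and \<gamma>'
  assume H: "(\<forall>t\<in>{0..<1}. (\<gamma> has_vector_derivative \<gamma>' t) (at t within {0..<1})) \<and>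
        continuous_on {0..<1} \<gamma>' \<and> \<gamma> ` {0..<1} \<subseteq> ball 0 1 \<and> ((\<lambda>t. norm (\<gamma> t)) \<longlongrightarrow> 1) (at_left 1)"
  then have I: "(\<integral>\<^sup>+ t. ennreal (f (\<gamma> t) * norm (\<gamma>' t)) * indicator {0..<1} t \<partial>lborel) = \<infinity>"
    using c unfolding complete_disk_metric_def by blast
  have img: "\<gamma> ` {0..<1} \<subseteq> ball 0 1" using H by blast
  have "(\<integral>\<^sup>+ t. ennreal (f (\<gamma> t) * norm (\<gamma>' t)) * indicator {0..<1} t \<partial>lborel)
      = (\<integral>\<^sup>+ t. ennreal (g (\<gamma> t) * norm (\<gamma>' t)) * indicator {0..<1} t \<partial>lborel)"
  proof (intro nn_integral_cong)
    fix t :: real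
    show "ennreal (f (\<gamma> t) * norm (\<gamma>' t)) * indicator {0..<1} t = ennreal (g (\<gamma> t) * norm (\<gamma>' t)) * indicator {0..<1} t"
    proof (cases "t \<in> {0..<1}")
      case True
      then have "\<gamma> t \<in> ball 0 1" using img by (auto simp del: mem_ball simp: image_subset_iff)
      then show ?thesis using eq by simp
    qed simp
  qed
  then show "(\<integral>\<^sup>+ t. ennreal (g (\<gamma> t) * norm (\<gamma>' t)) * indicator {0..<1} t \<partial>lborel) = \<infinity>"
    using I by simp
qed

lemma meas_ind:
  fixes f :: "real \<Rightarrow> real"
  assumes "continuous_on {0..<1} f"
  shows "(\<lambda>t. ennreal (f t) * indicator {0..<1} t) \<in> borel_measurable lborel"
proof -
  have "(\<lambda>t. indicator {0..<1} t *\<^sub>R f t) \<in> borel_measurable borel"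
    by (rule borel_measurable_continuous_on_indicator) (use assms in auto)
  then have "(\<lambda>t. ennreal (indicator {0..<1} t *\<^sub>R f t)) \<in> borel_measurable borel"
    by measurable
  moreover have "(\<lambda>t. ennreal (indicator {0..<1} t *\<^sub>R f t)) = (\<lambda>t. ennreal (f t) * indicator {0..<1} t)"
    by (auto simp: fun_eq_iff split: split_indicator)
  ultimately show ?thesis by simp
qed

lemma alg_bound:
  fixes q M A B x t y zz :: real
  assumes q: "0 < q" "q \<le> 9 * M" "1 / q \<le> M"
    and x: "x = q * A" and B: "B = q * t" and nn: "0 \<le> A" "0 \<le> t" "0 \<le> y"
    and y: "y \<le> t + x" and zz: "zz\<^sup>2 \<le> x\<^sup>2 + y\<^sup>2"
  shows "sqrt (x\<^sup>2 + y\<^sup>2 + zz\<^sup>2) \<le> 23 * M * sqrt (A\<^sup>2 + B\<^sup>2)"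
proof -
  have M0: "0 \<le> M" using q by (smt (verit) divide_pos_pos)
  have x0: "0 \<le> x" using x q nn by simp
  have q2: "q\<^sup>2 \<le> (9 * M)\<^sup>2" using q by (intro power_mono) auto
  have xx: "x\<^sup>2 \<le> 81 * M\<^sup>2 * A\<^sup>2"
  proof -
    have "x\<^sup>2 = q\<^sup>2 * A\<^sup>2" using x by (simp add: power_mult_distrib)
    also have "\<dots> \<le> (9 * M)\<^sup>2 * A\<^sup>2" by (intro mult_right_mono q2) auto
    finally show ?thesis by (simp add: power_mult_distrib)
  qed
  have tle: "t \<le> M * B"
  proof -
    have "t = (1 / q) * B" using B q by simp
    also have "\<dots> \<le> M * B" by (intro mult_right_mono q) (use B q nn in simp)
    finally show ?thesis .
  qed
  have tt: "t\<^sup>2 \<le> M\<^sup>2 * B\<^sup>2"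
  proof -
    have "t\<^sup>2 \<le> (M * B)\<^sup>2" by (intro power_mono tle nn)
    then show ?thesis by (simp add: power_mult_distrib)
  qed
  have yy: "y\<^sup>2 \<le> 2 * t\<^sup>2 + 2 * x\<^sup>2"
  proof -
    have "y\<^sup>2 \<le> (t + x)\<^sup>2" by (intro power_mono y nn)
    also have "\<dots> \<le> 2 * t\<^sup>2 + 2 * x\<^sup>2" using zero_le_power2[of "t - x"]
      unfolding power2_sum power2_diff by linarith
    finally show ?thesis .
  qed
  have "x\<^sup>2 + y\<^sup>2 + zz\<^sup>2 \<le> 6 * (x\<^sup>2 + t\<^sup>2)" using yy zz zero_le_power2[of t] by (smt (verit))
  also have "\<dots> \<le> 6 * (81 * M\<^sup>2 * A\<^sup>2 + 81 * M\<^sup>2 * B\<^sup>2)"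
  proof (intro mult_left_mono add_mono xx)
    have "t\<^sup>2 \<le> M\<^sup>2 * B\<^sup>2" by (rule tt)
    also have "\<dots> \<le> 81 * M\<^sup>2 * B\<^sup>2" by simp
    finally show "t\<^sup>2 \<le> 81 * M\<^sup>2 * B\<^sup>2" .
  qed simp
  also have "\<dots> \<le> (23 * M)\<^sup>2 * (A\<^sup>2 + B\<^sup>2)"
    by (simp add: power_mult_distrib algebra_simps)
  finally have "sqrt (x\<^sup>2 + y\<^sup>2 + zz\<^sup>2) \<le> sqrt ((23 * M)\<^sup>2 * (A\<^sup>2 + B\<^sup>2))"
    by (rule real_sqrt_le_mono)
  also have "\<dots> = 23 * M * sqrt (A\<^sup>2 + B\<^sup>2)"
    using M0 by (simp add: real_sqrt_mult)
  finally show ?thesis .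
qed




lemma i1: fixes E a x y :: complex assumes "E \<noteq> 0"
  shows "a * inverse E + inverse E * (y * a) * x = (1 + x*y) * E * (inverse (E^2) * a)"
  using assms by (simp add: field_simps power2_eq_square)
lemma i2: fixes E a b x y :: complex assumes "E \<noteq> 0"
  shows "(0 + (a * y + b * x)) * E + E * (- y * a) * (1 + x * y) = x * inverse E * (E^2 * (b - y^2 * a))"
  using assms by (simp add: field_simps power2_eq_square)
lemma i3: fixes E a x y :: complex assumes "E \<noteq> 0"
  shows "(inverse E * ((1 + x * y) * E * (inverse (E^2) * a)) - x * inverse E * (inverse E * (y * a))) / 1 = inverse (E^2) * a"
  using assms by (simp add: field_simps power2_eq_square)
lemma i4: fixes E a b x y :: complex assumes "E \<noteq> 0"
  shows "((1 + x * y) * E * (b * E + E * (- y * a) * y) - y * E * (x * inverse E * (E^2 * (b - y^2 * a)))) / 1 = E^2 * (b - y^2 * a)"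
  using assms by (simp add: field_simps power2_eq_square)

theorem proposition2p4:
  fixes X Y Z W :: "complex \<Rightarrow> complex"
  assumes holo: "holo_map3 X Y Z"
    and null: "null_map3 X Y Z"
    and imm: "immersion_map3 X Y Z"
    and bdd: "bounded ((\<lambda>z. (X z, Y z, Z z)) ` ball 0 1)"
    and compl: "complete_disk_metric (induced_density3 X Y Z)"
    and hX: "\<forall>z\<in>ball 0 1. 1 < cmod (X z) \<and> cmod (X z) < 2"
    and hY: "\<forall>z\<in>ball 0 1. cmod (Y z) < 1/3"
    and W_holo: "W holomorphic_on ball 0 1"
    and W0: "W 0 = 0"
    and W_deriv: "\<forall>z\<in>ball 0 1. deriv W z = - Y z * deriv X z"
  shows "complete_disk_metric (\<lambda>z. sqrt ((cmod (exp (-2 * W z) * deriv X z))\<^sup>2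
             + (cmod (exp (2 * W z) * (deriv Y z - (Y z)\<^sup>2 * deriv X z)))\<^sup>2))
       \<and> weakly_complete_front (\<lambda>z. exp (- W z)) (\<lambda>z. Y z * exp (W z))
            (\<lambda>z. X z * exp (- W z)) (\<lambda>z. (1 + X z * Y z) * exp (W z))"
proof -
  define om where "om z = exp (-2 * W z) * deriv X z" for z
  define th where "th z = exp (2 * W z) * (deriv Y z - (Y z)\<^sup>2 * deriv X z)" for z
  define \<rho> where "\<rho> z = sqrt ((cmod (om z))\<^sup>2 + (cmod (th z))\<^sup>2)" for z
  define c where "c z = X z * exp (- W z)" for z
  define d where "d z = (1 + X z * Y z) * exp (W z)" for z
  have Xh: "X holomorphic_on ball 0 1" and Yh: "Y holomorphic_on ball 0 1" and Zh: "Z holomorphic_on ball 0 1"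
    using holo unfolding holo_map3_def by auto
  have dX: "(X has_field_derivative deriv X z) (at z)" if "z \<in> ball 0 1" for z
    using holomorphic_derivI[OF Xh open_ball that] .
  have dY: "(Y has_field_derivative deriv Y z) (at z)" if "z \<in> ball 0 1" for z
    using holomorphic_derivI[OF Yh open_ball that] .
  have dW: "(W has_field_derivative (- Y z * deriv X z)) (at z)" if "z \<in> ball 0 1" for z
    using holomorphic_derivI[OF W_holo open_ball that] W_deriv that by simp
  have E1: "exp (- w) = inverse (exp w)" for w :: complex by (rule exp_minus)
  have E2: "exp (2 * w) = exp w ^ 2" for w :: complex
  proof -
    have "exp (2 * w) = exp (w + w)" by (simp only: mult_2)
    also have "\<dots> = exp w * exp w" by (rule exp_add)
    finally show ?thesis by (simp add: power2_eq_square)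
  qed
  have E3: "exp (-2 * w) = inverse (exp w ^ 2)" for w :: complex
  proof -
    have "exp (-2 * w) = exp (- (2 * w))" by simp
    also have "\<dots> = inverse (exp w ^ 2)" by (simp add: exp_minus E2)
    finally show ?thesis .
  qed
  have ea: "((\<lambda>z. exp (- W z)) has_field_derivative exp (- W z) * (Y z * deriv X z)) (at z)"
    if z: "z \<in> ball 0 1" for z
    using DERIV_chain2[OF DERIV_exp DERIV_minus[OF dW[OF z]]] by simp
  have eb: "((\<lambda>z. exp (W z)) has_field_derivative exp (W z) * (- Y z * deriv X z)) (at z)"
    if z: "z \<in> ball 0 1" for z
    using DERIV_chain2[OF DERIV_exp dW[OF z]] by simp
  have dc: "(c has_field_derivative d z * om z) (at z)" if z: "z \<in> ball 0 1" for z
  proof -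
    have "(c has_field_derivative deriv X z * exp (- W z) + exp (- W z) * (Y z * deriv X z) * X z) (at z)"
      unfolding c_def by (rule DERIV_mult[OF dX[OF z] ea[OF z]])
    moreover have "deriv X z * exp (- W z) + exp (- W z) * (Y z * deriv X z) * X z = d z * om z"
      unfolding d_def om_def E1 E3 by (rule i1) simp
    ultimately show ?thesis by simp
  qed
  have dd: "(d has_field_derivative c z * th z) (at z)" if z: "z \<in> ball 0 1" for z
  proof -
    have p: "((\<lambda>z. 1 + X z * Y z) has_field_derivative 0 + (deriv X z * Y z + deriv Y z * X z)) (at z)"
      by (rule DERIV_add[OF DERIV_const DERIV_mult[OF dX[OF z] dY[OF z]]])
    have "(d has_field_derivative (0 + (deriv X z * Y z + deriv Y z * X z)) * exp (W z)
            + exp (W z) * (- Y z * deriv X z) * (1 + X z * Y z)) (at z)"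
      unfolding d_def by (rule DERIV_mult[OF p eb[OF z]])
    moreover have "(0 + (deriv X z * Y z + deriv Y z * X z)) * exp (W z)
            + exp (W z) * (- Y z * deriv X z) * (1 + X z * Y z) = c z * th z"
      unfolding c_def th_def E1 E2 by (rule i2) simp
    ultimately show ?thesis by simp
  qed
  have cdX: "continuous_on (ball 0 1) (deriv X)"
    by (rule holomorphic_on_imp_continuous_on[OF holomorphic_deriv[OF Xh open_ball]])
  have cdY: "continuous_on (ball 0 1) (deriv Y)"
    by (rule holomorphic_on_imp_continuous_on[OF holomorphic_deriv[OF Yh open_ball]])
  have cX: "continuous_on (ball 0 1) X" by (rule holomorphic_on_imp_continuous_on[OF Xh])
  have cY: "continuous_on (ball 0 1) Y" by (rule holomorphic_on_imp_continuous_on[OF Yh])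
  have cW: "continuous_on (ball 0 1) W" by (rule holomorphic_on_imp_continuous_on[OF W_holo])
  have cr: "continuous_on (ball 0 1) \<rho>"
    unfolding \<rho>_def om_def th_def by (intro continuous_intros cdX cdY cX cY cW)
  have bo: "cmod (om z) \<le> \<rho> z" for z
  proof -
    have "sqrt ((cmod (om z))\<^sup>2) \<le> \<rho> z" unfolding \<rho>_def by (intro real_sqrt_le_mono) simp
    then show ?thesis by simp
  qed
  have bt: "cmod (th z) \<le> \<rho> z" for z
  proof -
    have "sqrt ((cmod (th z))\<^sup>2) \<le> \<rho> z" unfolding \<rho>_def by (intro real_sqrt_le_mono) simp
    then show ?thesis by simp
  qed
  have r0: "0 \<le> \<rho> z" for z unfolding \<rho>_def by simp
  have pointwise: "induced_density3 X Y Z z \<le> 23 * M * \<rho> z"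
    if z: "z \<in> ball 0 1" and Mz: "(cmod (c z))\<^sup>2 + (cmod (d z))\<^sup>2 \<le> M" for z M
  proof -
    define u where "u = Re (W z)"
    define q where "q = exp (2 * u)"
    have q0: "0 < q" unfolding q_def by simp
    have em: "(exp (- u))\<^sup>2 * q = 1" unfolding q_def
      by (simp add: power2_eq_square exp_add[symmetric])
    have ep: "(exp u)\<^sup>2 = q" unfolding q_def power2_eq_square exp_add[symmetric] by simp
    have X1: "1 < cmod (X z)" and X2: "cmod (X z) < 2" using hX z by auto
    have Y1: "cmod (Y z) < 1/3" using hY z by auto
    have c2: "(cmod (c z))\<^sup>2 = (cmod (X z))\<^sup>2 * (exp (- u))\<^sup>2"
      unfolding c_def u_def by (simp add: norm_mult power_mult_distrib)
    have d2: "(cmod (d z))\<^sup>2 = (cmod (1 + X z * Y z))\<^sup>2 * q"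
      unfolding d_def u_def[symmetric] ep[symmetric] by (simp add: norm_mult power_mult_distrib u_def)
    have q1: "1 / q \<le> M"
    proof -
      have "1 / q = (exp (- u))\<^sup>2" using em q0 by (simp add: field_simps)
      also have "\<dots> \<le> (cmod (X z))\<^sup>2 * (exp (- u))\<^sup>2"
      proof -
        have "1 \<le> (cmod (X z))\<^sup>2" using X1 by (simp add: one_le_power less_imp_le)
        then show ?thesis by (simp add: mult_le_cancel_right1)
      qed
      also have "\<dots> \<le> M" using Mz c2 zero_le_power2[of "cmod (d z)"] by linarith
      finally show ?thesis .
    qed
    have XY: "1/3 \<le> cmod (1 + X z * Y z)"
    proof -
      have "cmod (X z * Y z) \<le> 2 * (1/3)"
        unfolding norm_mult using X2 Y1 by (intro mult_mono) auto
      moreover have "1 \<le> cmod (1 + X z * Y z) + cmod (X z * Y z)"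
        using norm_triangle_ineq4[of "1 + X z * Y z" "X z * Y z"] by simp
      ultimately show ?thesis by linarith
    qed
    have q9: "q \<le> 9 * M"
    proof -
      have "(1/3)\<^sup>2 \<le> (cmod (1 + X z * Y z))\<^sup>2" using XY by (intro power_mono) auto
      then have "(1/3)\<^sup>2 * q \<le> (cmod (1 + X z * Y z))\<^sup>2 * q" using q0 by (intro mult_right_mono) auto
      then have "q / 9 \<le> (cmod (d z))\<^sup>2" using d2 by (simp add: power2_eq_square)
      then show ?thesis using Mz zero_le_power2[of "cmod (c z)"] by linarith
    qed
    define xx where "xx = cmod (deriv X z)"
    define tt where "tt = cmod (deriv Y z - (Y z)\<^sup>2 * deriv X z)"
    define yy where "yy = cmod (deriv Y z)"
    define zz where "zz = cmod (deriv Z z)"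
    have A: "xx = q * cmod (om z)"
    proof -
      have "cmod (om z) = exp (- 2 * u) * xx" unfolding om_def xx_def u_def by (simp add: norm_mult)
      then show ?thesis unfolding q_def by (simp add: exp_add[symmetric])
    qed
    have B: "cmod (th z) = q * tt" unfolding th_def tt_def q_def u_def by (simp add: norm_mult)
    have yle: "yy \<le> tt + xx"
    proof -
      have "deriv Y z = (deriv Y z - (Y z)\<^sup>2 * deriv X z) + (Y z)\<^sup>2 * deriv X z" by simp
      then have "yy \<le> tt + cmod ((Y z)\<^sup>2 * deriv X z)"
        unfolding yy_def tt_def by (metis norm_triangle_ineq)
      moreover have "cmod ((Y z)\<^sup>2 * deriv X z) \<le> xx"
      proof -
        have "(cmod (Y z))\<^sup>2 \<le> 1" using Y1 by (simp add: abs_square_le_1)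
        then show ?thesis unfolding xx_def norm_mult norm_power
          by (intro mult_left_le_one_le) auto
      qed
      ultimately show ?thesis by linarith
    qed
    have zle: "zz\<^sup>2 \<le> xx\<^sup>2 + yy\<^sup>2"
    proof -
      have "(deriv Z z)\<^sup>2 = - ((deriv X z)\<^sup>2 + (deriv Y z)\<^sup>2)"
        using null z unfolding null_map3_def by (auto simp: algebra_simps eq_neg_iff_add_eq_0)
      then have "zz\<^sup>2 = cmod ((deriv X z)\<^sup>2 + (deriv Y z)\<^sup>2)"
        unfolding zz_def by (metis norm_minus_cancel norm_power)
      also have "\<dots> \<le> xx\<^sup>2 + yy\<^sup>2" unfolding xx_def yy_def
        by (metis norm_power norm_triangle_ineq)
      finally show ?thesis .
    qed
    have "sqrt (xx\<^sup>2 + yy\<^sup>2 + zz\<^sup>2) \<le> 23 * M * sqrt ((cmod (om z))\<^sup>2 + (cmod (th z))\<^sup>2)"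
      by (rule alg_bound[OF q0 q9 q1 A B _ _ _ yle zle]) (auto simp: tt_def yy_def)
    then show ?thesis unfolding induced_density3_def \<rho>_def xx_def yy_def zz_def .
  qed
  have C1: "complete_disk_metric \<rho>"
    unfolding complete_disk_metric_def
  proof (intro allI impI)
    fix \<gamma> :: "real \<Rightarrow> complex" and \<gamma>'
    assume H: "(\<forall>t\<in>{0..<1}. (\<gamma> has_vector_derivative \<gamma>' t) (at t within {0..<1})) \<and>
        continuous_on {0..<1} \<gamma>' \<and> \<gamma> ` {0..<1} \<subseteq> ball 0 1 \<and> ((\<lambda>t. norm (\<gamma> t)) \<longlongrightarrow> 1) (at_left 1)"
    then have dg: "\<forall>t\<in>{0..<1}. (\<gamma> has_vector_derivative \<gamma>' t) (at t within {0..<1})"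
      and cg': "continuous_on {0..<1} \<gamma>'" and img: "\<gamma> ` {0..<1} \<subseteq> ball 0 1" by auto
    have I: "(\<integral>\<^sup>+ t. ennreal (induced_density3 X Y Z (\<gamma> t) * norm (\<gamma>' t)) * indicator {0..<1} t \<partial>lborel) = \<infinity>"
      using compl H unfolding complete_disk_metric_def by blast
    show "(\<integral>\<^sup>+ t. ennreal (\<rho> (\<gamma> t) * norm (\<gamma>' t)) * indicator {0..<1} t \<partial>lborel) = \<infinity>"
    proof (rule ccontr)
      assume fin: "(\<integral>\<^sup>+ t. ennreal (\<rho> (\<gamma> t) * norm (\<gamma>' t)) * indicator {0..<1} t \<partial>lborel) \<noteq> \<infinity>"
      obtain M where Mb: "\<forall>t\<in>{0..<1}. (cmod (c (\<gamma> t)))\<^sup>2 + (cmod (d (\<gamma> t)))\<^sup>2 \<le> M"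
        using gronwall_path[OF dg cg' img dc dd cr bo bt fin] by blast
      have M00: "(cmod (c (\<gamma> 0)))\<^sup>2 + (cmod (d (\<gamma> 0)))\<^sup>2 \<le> M" using Mb by simp
      have M0: "0 \<le> M" using M00 zero_le_power2[of "cmod (c (\<gamma> 0))"] zero_le_power2[of "cmod (d (\<gamma> 0))"] by linarith
      have gin: "\<gamma> t \<in> ball 0 1" if "t \<in> {0..<1}" for t
        using img that by (auto simp del: mem_ball simp: image_subset_iff)
      have c\<gamma>: "continuous_on {0..<1} \<gamma>"
        using dg by (intro continuous_on_vector_derivative) auto
      have cg: "continuous_on {0..<1} (\<lambda>t. \<rho> (\<gamma> t) * norm (\<gamma>' t))"
        by (intro continuous_on_mult continuous_on_norm cg' continuous_on_compose2[OF cr c\<gamma> img])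
      have "(\<integral>\<^sup>+ t. ennreal (induced_density3 X Y Z (\<gamma> t) * norm (\<gamma>' t)) * indicator {0..<1} t \<partial>lborel)
          \<le> (\<integral>\<^sup>+ t. ennreal (23 * M) * (ennreal (\<rho> (\<gamma> t) * norm (\<gamma>' t)) * indicator {0..<1} t) \<partial>lborel)"
      proof (intro nn_integral_mono)
        fix t :: real
        show "ennreal (induced_density3 X Y Z (\<gamma> t) * norm (\<gamma>' t)) * indicator {0..<1} t
            \<le> ennreal (23 * M) * (ennreal (\<rho> (\<gamma> t) * norm (\<gamma>' t)) * indicator {0..<1} t)"
        proof (cases "t \<in> {0..<1}")
          case True
          have "induced_density3 X Y Z (\<gamma> t) * norm (\<gamma>' t) \<le> (23 * M * \<rho> (\<gamma> t)) * norm (\<gamma>' t)"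
            by (intro mult_right_mono pointwise[OF gin[OF True] Mb[rule_format, OF True]]) simp
          then have "ennreal (induced_density3 X Y Z (\<gamma> t) * norm (\<gamma>' t))
              \<le> ennreal (23 * M * (\<rho> (\<gamma> t) * norm (\<gamma>' t)))"
            by (intro ennreal_leI) (simp add: mult.assoc)
          also have "\<dots> = ennreal (23 * M) * ennreal (\<rho> (\<gamma> t) * norm (\<gamma>' t))"
            by (rule ennreal_mult) (use M0 r0 in auto)
          finally show ?thesis using True by simp
        qed simp
      qed
      also have "\<dots> = ennreal (23 * M) * (\<integral>\<^sup>+ t. ennreal (\<rho> (\<gamma> t) * norm (\<gamma>' t)) * indicator {0..<1} t \<partial>lborel)"
        by (rule nn_integral_cmult[OF meas_ind[OF cg]])
      also have "\<dots> < \<infinity>"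
        using fin by (simp add: ennreal_mult_eq_top_iff less_top[symmetric])
      finally show False using I by simp
    qed
  qed
  have rho_eq: "\<rho> = (\<lambda>z. sqrt ((cmod (exp (-2 * W z) * deriv X z))\<^sup>2
             + (cmod (exp (2 * W z) * (deriv Y z - (Y z)\<^sup>2 * deriv X z)))\<^sup>2))"
    by (simp add: fun_eq_iff \<rho>_def om_def th_def)
  have C2: "weakly_complete_front (\<lambda>z. exp (- W z)) (\<lambda>z. Y z * exp (W z))
            (\<lambda>z. X z * exp (- W z)) (\<lambda>z. (1 + X z * Y z) * exp (W z))"
    unfolding weakly_complete_front_def
  proof (rule cdm_cong[OF _ C1])
    fix z :: complex assume z: "z \<in> ball 0 1"
    have det: "exp (- W z) * ((1 + X z * Y z) * exp (W z)) - Y z * exp (W z) * (X z * exp (- W z)) = 1"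
      unfolding E1 by (simp add: field_simps)
    have da: "deriv (\<lambda>z. exp (- W z)) z = exp (- W z) * (Y z * deriv X z)"
      by (rule DERIV_imp_deriv[OF ea[OF z]])
    have dc': "deriv (\<lambda>z. X z * exp (- W z)) z = d z * om z"
      using DERIV_imp_deriv[OF dc[OF z]] unfolding c_def .
    have dd': "deriv (\<lambda>z. (1 + X z * Y z) * exp (W z)) z = c z * th z"
      using DERIV_imp_deriv[OF dd[OF z]] unfolding d_def .
    have db: "deriv (\<lambda>z. Y z * exp (W z)) z = deriv Y z * exp (W z) + exp (W z) * (- Y z * deriv X z) * Y z"
      by (rule DERIV_imp_deriv[OF DERIV_mult[OF dY[OF z] eb[OF z]]])
    have o: "lift_omega (\<lambda>z. exp (- W z)) (\<lambda>z. Y z * exp (W z)) (\<lambda>z. X z * exp (- W z)) (\<lambda>z. (1 + X z * Y z) * exp (W z)) z = om z"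
      unfolding lift_omega_def det da dc' unfolding c_def d_def om_def E1 E3
      by (rule i3) simp
    have t: "lift_theta (\<lambda>z. exp (- W z)) (\<lambda>z. Y z * exp (W z)) (\<lambda>z. X z * exp (- W z)) (\<lambda>z. (1 + X z * Y z) * exp (W z)) z = th z"
      unfolding lift_theta_def det db dd' unfolding c_def d_def th_def E1 E2
      by (rule i4) simp
    show "\<rho> z = sqrt ((cmod (lift_omega (\<lambda>z. exp (- W z)) (\<lambda>z. Y z * exp (W z)) (\<lambda>z. X z * exp (- W z)) (\<lambda>z. (1 + X z * Y z) * exp (W z)) z))\<^sup>2
        + (cmod (lift_theta (\<lambda>z. exp (- W z)) (\<lambda>z. Y z * exp (W z)) (\<lambda>z. X z * exp (- W z)) (\<lambda>z. (1 + X z * Y z) * exp (W z)) z))\<^sup>2)"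
      unfolding o t \<rho>_def ..
  qed
  show ?thesis using C1 C2 rho_eq by simp
qed


end
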